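(* Let $\zeta_n=e^{2\pi i/n}$, $F_n={\mathbf Q}(\zeta_n+\zeta_n^{-1})$ and $\underline{\mathcal O}_n={\mathbf Z}[\zeta_n+\zeta_n^{-1}]$; let $\mathfrak p_n$ be the unique prime of $\underline{\mathcal O}_n$ above $2$. (a) If $n=2^s\ge 8$, put $p_n=2+\zeta_n+\zeta_n^{-1}$. Then $\operatorname{N}_{F_n/{\mathbf Q}}(p_n)=2$ and $p_n$ is a totally positive generator of $\mathfrak p_n$. (b) If $n=3\cdot 2^s\ge 12$, put $p_n'=1+\zeta_n+\zeta_n^{-1}$. Then $\operatorname{N}_{F_n/{\mathbf Q}}(p_n')=\operatorname{N}_{F_n/{\mathbf Q}}(p_n'-2)=-2$ and $\mathfrak p_n=(p_n')$. All units of $\underline{\mathcal O}_n$ have norm $1$, and there is no element of $\underline{\mathcal O}_n$ of norm $2$. *)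

theory Defs
  imports Complex_Main "HOL-Computational_Algebra.Polynomial" "HOL-Algebra.Ideal"
begin

definition zeta :: "nat \<Rightarrow> complex" where
  "zeta n = cis (2 * pi / real n)"

definition theta :: "nat \<Rightarrow> complex" where
  "theta n = zeta n + inverse (zeta n)"

definition Ocyc :: "nat \<Rightarrow> complex set" where
  "Ocyc n = {x. \<exists>p :: int poly. x = poly (map_poly of_int p) (theta n)}"

definition Oring :: "nat \<Rightarrow> complex ring" where
  "Oring n = \<lparr>carrier = Ocyc n, mult = (*), one = 1, zero = 0, add = (+)\<rparr>"

text \<open>Index set of the real embeddings of F_n: theta_n is sent to
  zeta_n^k + zeta_n^(-k) for 0 < k < n/2 with gcd(k,n)=1.\<close>
definition emb_idx :: "nat \<Rightarrow> nat set" where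
  "emb_idx n = {k. 0 < k \<and> 2 * k < n \<and> coprime k n}"

definition conj_emb :: "nat \<Rightarrow> nat \<Rightarrow> complex \<Rightarrow> complex" where
  "conj_emb n k x =
     poly (map_poly of_int (SOME p :: int poly. x = poly (map_poly of_int p) (theta n)))
          (zeta n ^ k + inverse (zeta n ^ k))"

definition normF :: "nat \<Rightarrow> complex \<Rightarrow> complex" where
  "normF n x = (\<Prod>k\<in>emb_idx n. conj_emb n k x)"

definition totally_positive :: "nat \<Rightarrow> complex \<Rightarrow> bool" where
  "totally_positive n x \<longleftrightarrow> (\<forall>k\<in>emb_idx n. conj_emb n k x \<in> \<real> \<and> Re (conj_emb n k x) > 0)"

definition prime_above_2 :: "nat \<Rightarrow> complex set" where
  "prime_above_2 n = (THE P. primeideal P (Oring n) \<and> 2 \<in> P)"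

end

theory Submission
  imports Defs "HOL-Computational_Algebra.Polynomial_Factorial"
begin


definition ev :: "complex \<Rightarrow> int poly \<Rightarrow> complex" where
  "ev x p = poly (map_poly of_int p) x"

lemma ev_pCons [simp]: "ev x (pCons a p) = of_int a + x * ev x p"
  unfolding ev_def by (simp add: map_poly_pCons)

lemma ev_0 [simp]: "ev x 0 = 0" by (simp add: ev_def)
lemma ev_const [simp]: "ev x [:a:] = of_int a" by simp
lemma ev_1 [simp]: "ev x 1 = 1" by (simp add: ev_def)

lemma ev_add [simp]: "ev x (p + q) = ev x p + ev x q"
proof (induction p arbitrary: q rule: pCons_induct)
  case 0 then show ?case by simp
next
  case (pCons a p) then show ?case
    by (cases q rule: pCons_cases) (simp add: algebra_simps)
qed

lemma ev_uminus [simp]: "ev x (- p) = - ev x p"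
  by (induction p rule: pCons_induct) (simp_all add: algebra_simps)

lemma ev_diff [simp]: "ev x (p - q) = ev x p - ev x q"
  using ev_add[of x p "-q"] by simp

lemma ev_smult [simp]: "ev x (smult a p) = of_int a * ev x p"
  by (induction p rule: pCons_induct) (simp_all add: algebra_simps)

lemma ev_mult [simp]: "ev x (p * q) = ev x p * ev x q"
  by (induction p rule: pCons_induct) (simp_all add: algebra_simps)

lemma ev_pcompose [simp]: "ev x (pcompose p q) = ev (ev x q) p"
  by (induction p rule: pCons_induct) (simp_all add: pcompose_pCons algebra_simps)

lemma ev_power [simp]: "ev x (p ^ n) = ev x p ^ n"
  by (induction n) simp_all

lemma ev_monom [simp]: "ev x (monom a n) = of_int a * x ^ n"
  by (induction n) (simp_all add: monom_Suc monom_0)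

lemma ev_X [simp]: "ev x [:a, b:] = of_int a + x * of_int b" by simp


lemma ev_of_int: "ev (of_int m) A = of_int (poly A m)"
  by (induction A rule: pCons_induct) simp_all

lemma ev_of_real_int: "ev (of_real r) A = of_real (poly (map_poly of_int A) r)"
  by (induction A rule: pCons_induct) (simp_all add: map_poly_pCons)

lemma Ocyc_iff: "x \<in> Ocyc n \<longleftrightarrow> (\<exists>p. x = ev (theta n) p)"
  by (simp add: Ocyc_def ev_def)

definition th :: "nat \<Rightarrow> nat \<Rightarrow> complex" where
  "th n k = zeta n ^ k + inverse (zeta n ^ k)"

lemma theta_th: "theta n = th n 1"
  by (simp add: theta_def th_def)

lemma cis_plus_inv: "cis a + cis (- a) = of_real (2 * cos a)"
  by (simp add: complex_eq_iff cis.sel)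

lemma th_cos: "th n k = of_real (2 * cos (2 * pi * k / n))"
proof -
  define a where "a = real k * (2 * pi / real n)"
  have "zeta n ^ k = cis a"
    by (simp add: zeta_def DeMoivre a_def)
  then have "th n k = cis a + cis (- a)" by (simp add: th_def)
  also have "\<dots> = of_real (2 * cos a)" by (rule cis_plus_inv)
  finally show ?thesis by (simp add: a_def algebra_simps)
qed

lemma cos_sq2: "(2 * cos (x::real)) ^ 2 - 2 = 2 * cos (2 * x)"
  by (simp add: cos_double_cos power_mult_distrib)

lemma th_double: assumes "n > 0" shows "th (2 * n) k ^ 2 - 2 = th n k"
proof -
  have e: "2 * (2 * pi * k / (2 * n)) = 2 * pi * k / n" using assms by (simp add: field_simps)
  have "(2 * cos (2 * pi * k / (2 * n))) ^ 2 - 2 = 2 * cos (2 * pi * k / n)"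
    using cos_sq2[of "2 * pi * k / (2 * n)"] unfolding e .
  then have "of_real ((2 * cos (2 * pi * k / (2 * n))) ^ 2 - 2) = (of_real (2 * cos (2 * pi * k / n)) :: complex)"
    by simp
  then show ?thesis by (simp add: th_cos)
qed

lemma th_neg: assumes "n > 0" "k \<le> n" shows "th (2 * n) (n - k) = - th (2 * n) k"
proof -
  have "2 * pi * real (n - k) / real (2 * n) = pi - 2 * pi * real k / real (2 * n)"
    using assms by (simp add: of_nat_diff field_simps)
  then show ?thesis by (simp add: th_cos)
qed

lemma coprime_sub_nat: assumes "k \<le> n" shows "coprime (n - k) n \<longleftrightarrow> coprime k (n::nat)"
proof -
  show ?thesis
    by (smt (verit, best) assms coprime_imp_coprime dvd_add_left_iff dvd_diffD1 le_add_diff_inverse2)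
qed

lemma emb_split:
  assumes "even n" "n > 2"
  shows "emb_idx (2 * n) = emb_idx n \<union> (\<lambda>k. n - k) ` emb_idx n"
    and "emb_idx n \<inter> (\<lambda>k. n - k) ` emb_idx n = {}"
    and "inj_on (\<lambda>k. n - k) (emb_idx n)"
proof -
  have cop: "coprime k (2 * n) \<longleftrightarrow> coprime k n" for k
    using assms(1) by (auto elim!: evenE simp: coprime_mult_right_iff)
  show "emb_idx (2 * n) = emb_idx n \<union> (\<lambda>k. n - k) ` emb_idx n"
  proof (intro equalityI subsetI)
    fix k assume k: "k \<in> emb_idx (2 * n)"
    then have k0: "0 < k" "k < n" "coprime k n" by (auto simp: emb_idx_def cop)
    show "k \<in> emb_idx n \<union> (\<lambda>k. n - k) ` emb_idx n"
    proof (cases "2 * k < n")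
      case True then show ?thesis using k0 by (simp add: emb_idx_def)
    next
      case False
      have "2 * k \<noteq> n"
      proof
        assume h: "2 * k = n"
        then have "gcd k n = k" by (metis gcd_nat.absorb_iff1 dvd_triv_right)
        with k0 have "k = 1" by (simp add: coprime_iff_gcd_eq_1)
        with h assms show False by simp
      qed
      with False have "n - k \<in> emb_idx n"
        using k0 by (auto simp: emb_idx_def coprime_sub_nat)
      moreover have "k = n - (n - k)" using k0 by simp
      ultimately show ?thesis by blast
    qed
  next
    fix k assume "k \<in> emb_idx n \<union> (\<lambda>k. n - k) ` emb_idx n"
    then show "k \<in> emb_idx (2 * n)"
      unfolding emb_idx_def cop by (auto simp: coprime_sub_nat)
  qed
  show "emb_idx n \<inter> (\<lambda>k. n - k) ` emb_idx n = {}"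
    by (auto simp: emb_idx_def)
  show "inj_on (\<lambda>k. n - k) (emb_idx n)"
    by (auto simp: emb_idx_def inj_on_def)
qed

lemma finite_emb [simp]: "finite (emb_idx n)"
  by (rule finite_subset[of _ "{..<n}"]) (auto simp: emb_idx_def)

lemma prod_step:
  assumes "even n" "n > 2" "\<And>t. F t * F (- t) = G (t ^ 2 - 2)"
  shows "(\<Prod>k\<in>emb_idx (2 * n). F (th (2 * n) k)) = (\<Prod>k\<in>emb_idx n. G (th n k))"
proof -
  note sp = emb_split[OF assms(1,2)]
  have "(\<Prod>k\<in>emb_idx (2 * n). F (th (2 * n) k))
      = (\<Prod>k\<in>emb_idx n. F (th (2 * n) k)) * (\<Prod>k\<in>(\<lambda>k. n - k) ` emb_idx n. F (th (2 * n) k))"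
    by (simp add: sp(1) prod.union_disjoint sp(2))
  also have "(\<Prod>k\<in>(\<lambda>k. n - k) ` emb_idx n. F (th (2 * n) k)) = (\<Prod>k\<in>emb_idx n. F (th (2 * n) (n - k)))"
    by (simp add: prod.reindex sp(3))
  also have "\<dots> = (\<Prod>k\<in>emb_idx n. F (- th (2 * n) k))"
    by (rule prod.cong) (auto simp: emb_idx_def th_neg)
  finally have "(\<Prod>k\<in>emb_idx (2 * n). F (th (2 * n) k)) = (\<Prod>k\<in>emb_idx n. F (th (2 * n) k) * F (- th (2 * n) k))"
    by (simp add: prod.distrib)
  also have "\<dots> = (\<Prod>k\<in>emb_idx n. G (th n k))"
    using assms by (intro prod.cong) (auto simp: th_double)
  finally show ?thesis .
qed



lemma evenodd_decomp: "\<exists>A B. \<forall>t. ev t f = ev (t ^ 2) A + t * ev (t ^ 2) B"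
proof (induction f rule: pCons_induct)
  case 0 then show ?case by (intro exI[of _ 0]) simp
next
  case (pCons a f)
  then obtain A B where AB: "\<forall>t. ev t f = ev (t ^ 2) A + t * ev (t ^ 2) B" by blast
  show ?case
    by (intro exI[of _ "pCons a B"] exI[of _ A]) (simp add: AB algebra_simps power2_eq_square)
qed

lemma norm_trans: "\<exists>g. \<forall>t. ev t f * ev (- t) f = ev (t ^ 2 - 2) g"
proof -
  obtain A B where AB: "\<forall>t. ev t f = ev (t ^ 2) A + t * ev (t ^ 2) B"
    using evenodd_decomp by blast
  define g where "g = (pcompose A [:2,1:])^2 - [:2,1:] * (pcompose B [:2,1:])^2"
  have "ev t f * ev (- t) f = ev (t ^ 2 - 2) g" for t
    by (simp add: AB g_def algebra_simps power2_eq_square)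
  then show ?thesis by blast
qed

lemma norm_form_step:
  assumes base: "\<And>f. \<exists>a b. (\<Prod>k\<in>emb_idx n0. ev (th n0 k) f) = of_int (a^2 - D * b^2)"
    and "even n0" "n0 > 2"
  shows "\<exists>a b. (\<Prod>k\<in>emb_idx (2^j * n0). ev (th (2^j * n0) k) f) = of_int (a^2 - D * b^2)"
proof (induction j arbitrary: f)
  case 0 then show ?case using base by simp
next
  case (Suc j)
  obtain g where g: "\<forall>t. ev t f * ev (- t) f = ev (t ^ 2 - 2) g" using norm_trans by blast
  have "(\<Prod>k\<in>emb_idx (2^Suc j * n0). ev (th (2^Suc j * n0) k) f)
      = (\<Prod>k\<in>emb_idx (2 * (2^j * n0)). ev (th (2 * (2^j * n0)) k) f)" by (simp add: mult.assoc)
  also have "\<dots> = (\<Prod>k\<in>emb_idx (2^j * n0). ev (th (2^j * n0) k) g)"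
  proof (rule prod_step)
    show "even (2 ^ j * n0)" using assms(2) by simp
    have "n0 \<le> 2 ^ j * n0" by simp
    then show "2 < 2 ^ j * n0" using assms(3) by linarith
  qed (use g in auto)
  finally show ?case using Suc[of g] by simp
qed

lemma emb8: "emb_idx 8 = {1, 3}"
proof -
  have "emb_idx 8 = {k. k \<in> {1,2,3} \<and> coprime k (8::nat)}"
    by (auto simp: emb_idx_def)
  also have "\<dots> = {1,3}" by (auto simp: coprime_iff_gcd_eq_1 gcd_non_0_nat)
  finally show ?thesis .
qed

lemma emb12: "emb_idx 12 = {1, 5}"
proof -
  have "emb_idx 12 = {k. k \<in> {1,2,3,4,5} \<and> coprime k (12::nat)}"
    by (auto simp: emb_idx_def)
  also have "\<dots> = {1,5}" by (auto simp: coprime_iff_gcd_eq_1 gcd_non_0_nat)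
  finally show ?thesis .
qed

lemma th8: "th 8 1 = of_real (sqrt 2)" "th 8 3 = - of_real (sqrt 2)"
proof -
  have "2 * pi * real 1 / real 8 = pi / 4" by simp
  then show "th 8 1 = of_real (sqrt 2)" by (simp add: th_cos cos_45)
  have "2 * pi * real 3 / real 8 = pi - pi / 4" by simp
  then have "cos (2 * pi * real 3 / real 8) = - (sqrt 2 / 2)" by (simp only: cos_pi_minus cos_45)
  then show "th 8 3 = - of_real (sqrt 2)" unfolding th_cos by simp
qed

lemma th12: "th 12 1 = of_real (sqrt 3)" "th 12 5 = - of_real (sqrt 3)"
proof -
  have "2 * pi * real 1 / real 12 = pi / 6" by simp
  then show "th 12 1 = of_real (sqrt 3)" by (simp add: th_cos cos_30)
  have "2 * pi * real 5 / real 12 = pi - pi / 6" by simp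
  then have "cos (2 * pi * real 5 / real 12) = - (sqrt 3 / 2)" by (simp only: cos_pi_minus cos_30)
  then show "th 12 5 = - of_real (sqrt 3)" unfolding th_cos by simp
qed

lemma base_form:
  assumes "r ^ 2 = of_int D"
  shows "\<exists>a b. ev r f * ev (- r) f = of_int (a^2 - D * b^2)"
proof -
  obtain A B where AB: "\<forall>t. ev t f = ev (t ^ 2) A + t * ev (t ^ 2) B"
    using evenodd_decomp by blast
  have e1: "ev r f = ev (of_int D) A + r * ev (of_int D) B" using AB assms by metis
  have e2: "ev (- r) f = ev (of_int D) A - r * ev (of_int D) B" using AB[rule_format, of "- r"] assms by simp
  have "ev r f * ev (- r) f = (ev (of_int D) A)^2 - r^2 * (ev (of_int D) B)^2"
    unfolding e1 e2 by (simp add: algebra_simps power2_eq_square)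
  also have "\<dots> = of_int ((poly A D)^2 - D * (poly B D)^2)"
    by (simp add: assms ev_of_int)
  finally show ?thesis by blast
qed

lemma norm_form_8: "\<exists>a b. (\<Prod>k\<in>emb_idx 8. ev (th 8 k) f) = of_int (a^2 - 2 * b^2)"
proof -
  have "(of_real (sqrt 2) :: complex) ^ 2 = of_int 2"
    by (metis of_int_numeral of_real_numeral of_real_power real_sqrt_pow2 zero_le_numeral)
  moreover have "(\<Prod>k\<in>emb_idx 8. ev (th 8 k) f) = ev (th 8 1) f * ev (th 8 3) f"
    by (simp add: emb8)
  ultimately show ?thesis using base_form[of "of_real (sqrt 2)" 2 f] unfolding th8 by simp
qed

lemma norm_form_12: "\<exists>a b. (\<Prod>k\<in>emb_idx 12. ev (th 12 k) f) = of_int (a^2 - 3 * b^2)"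
proof -
  have "(of_real (sqrt 3) :: complex) ^ 2 = of_int 3"
    by (metis of_int_numeral of_real_numeral of_real_power real_sqrt_pow2 zero_le_numeral)
  moreover have "(\<Prod>k\<in>emb_idx 12. ev (th 12 k) f) = ev (th 12 1) f * ev (th 12 5) f"
    by (simp add: emb12)
  ultimately show ?thesis using base_form[of "of_real (sqrt 3)" 3 f] unfolding th12 by simp
qed

lemma norm_form_a: "\<exists>a b. (\<Prod>k\<in>emb_idx (2^j * 8). ev (th (2^j * 8) k) f) = of_int (a^2 - 2 * b^2)"
  by (rule norm_form_step[OF norm_form_8]) auto

lemma norm_form_b: "\<exists>a b. (\<Prod>k\<in>emb_idx (2^j * 12). ev (th (2^j * 12) k) f) = of_int (a^2 - 3 * b^2)"
  by (rule norm_form_step[OF norm_form_12]) auto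



lemma prod_step_pow:
  assumes "even n0" "n0 > 2" "\<And>t. F t * F (- t) = G (t ^ 2 - 2)"
  shows "(\<Prod>k\<in>emb_idx (2^Suc j * n0). F (th (2^Suc j * n0) k)) = (\<Prod>k\<in>emb_idx (2^j * n0). G (th (2^j * n0) k))"
proof -
  have "(\<Prod>k\<in>emb_idx (2^Suc j * n0). F (th (2^Suc j * n0) k))
      = (\<Prod>k\<in>emb_idx (2 * (2^j * n0)). F (th (2 * (2^j * n0)) k))" by (simp add: mult.assoc)
  also have "\<dots> = (\<Prod>k\<in>emb_idx (2^j * n0). G (th (2^j * n0) k))"
  proof (rule prod_step)
    show "even (2 ^ j * n0)" using assms(1) by simp
    have "n0 \<le> 2 ^ j * n0" by simp
    then show "2 < 2 ^ j * n0" using assms(2) by linarith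
  qed (use assms(3) in auto)
  finally show ?thesis .
qed

lemma sqrt_sq_c: "(of_real (sqrt (numeral m)) :: complex) * of_real (sqrt (numeral m)) = numeral m"
proof -
  have "sqrt (numeral m) * sqrt (numeral m) = (numeral m :: real)" by simp
  then have "of_real (sqrt (numeral m) * sqrt (numeral m)) = (of_real (numeral m) :: complex)" by simp
  then show ?thesis by (simp only: of_real_mult of_real_numeral)
qed

lemma norm_vals_a:
  "(\<Prod>k\<in>emb_idx (2^j * 8). 2 + th (2^j * 8) k) = 2 \<and> (\<Prod>k\<in>emb_idx (2^j * 8). 2 - th (2^j * 8) k) = 2"
proof (induction j)
  case 0
  have s: "(of_real (sqrt 2) :: complex) * of_real (sqrt 2) = 2" by (rule sqrt_sq_c)
  have t: "th 8 (Suc 0) = of_real (sqrt 2)" using th8(1) by simp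
  show ?case by (simp add: emb8 th8 t algebra_simps s)
next
  case (Suc j)
  have a: "(\<Prod>k\<in>emb_idx (2^Suc j * 8). 2 + th (2^Suc j * 8) k) = (\<Prod>k\<in>emb_idx (2^j * 8). 2 - th (2^j * 8) k)"
    by (rule prod_step_pow[where F="\<lambda>t. 2 + t" and G="\<lambda>t. 2 - t"]) (auto simp: algebra_simps power2_eq_square)
  have b: "(\<Prod>k\<in>emb_idx (2^Suc j * 8). 2 - th (2^Suc j * 8) k) = (\<Prod>k\<in>emb_idx (2^j * 8). 2 - th (2^j * 8) k)"
    by (rule prod_step_pow[where F="\<lambda>t. 2 - t" and G="\<lambda>t. 2 - t"]) (auto simp: algebra_simps power2_eq_square)
  show ?case using a b Suc by simp
qed

lemma norm_vals_b:
  "(\<Prod>k\<in>emb_idx (2^j * 12). 1 + th (2^j * 12) k) = -2 \<and> (\<Prod>k\<in>emb_idx (2^j * 12). -1 - th (2^j * 12) k) = -2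
   \<and> (\<Prod>k\<in>emb_idx (2^j * 12). th (2^j * 12) k - 1) = -2"
proof (induction j)
  case 0
  have s: "(of_real (sqrt 3) :: complex) * of_real (sqrt 3) = 3" by (rule sqrt_sq_c)
  have t: "th 12 (Suc 0) = of_real (sqrt 3)" using th12(1) by simp
  show ?case by (simp add: emb12 th12 t algebra_simps s)
next
  case (Suc j)
  have a: "(\<Prod>k\<in>emb_idx (2^Suc j * 12). 1 + th (2^Suc j * 12) k) = (\<Prod>k\<in>emb_idx (2^j * 12). -1 - th (2^j * 12) k)"
    by (rule prod_step_pow[where F="\<lambda>t. 1 + t" and G="\<lambda>t. -1 - t"]) (auto simp: algebra_simps power2_eq_square)
  have b: "(\<Prod>k\<in>emb_idx (2^Suc j * 12). -1 - th (2^Suc j * 12) k) = (\<Prod>k\<in>emb_idx (2^j * 12). -1 - th (2^j * 12) k)"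
    by (rule prod_step_pow[where F="\<lambda>t. -1 - t" and G="\<lambda>t. -1 - t"]) (auto simp: algebra_simps power2_eq_square)
  have c: "(\<Prod>k\<in>emb_idx (2^Suc j * 12). th (2^Suc j * 12) k - 1) = (\<Prod>k\<in>emb_idx (2^j * 12). -1 - th (2^j * 12) k)"
    by (rule prod_step_pow[where F="\<lambda>t. t - 1" and G="\<lambda>t. -1 - t"]) (auto simp: algebra_simps power2_eq_square)
  show ?case using a b c Suc by simp
qed



lemma least_odd_coeff:
  fixes A :: "int poly"
  assumes "odd (coeff A m)"
  shows "\<exists>i. odd (coeff A i) \<and> (\<forall>k<i. even (coeff A k)) \<and> i \<le> degree A"
proof -
  define i where "i = (LEAST i. odd (coeff A i))"
  have 1: "odd (coeff A i)" unfolding i_def by (rule LeastI[of _ m]) (rule assms)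
  have 2: "even (coeff A k)" if "k < i" for k
    using not_less_Least[of k "\<lambda>i. odd (coeff A i)"] that unfolding i_def by blast
  have 3: "i \<le> degree A"
    by (rule le_degree) (use 1 in auto)
  show ?thesis using 1 2 3 by blast
qed

lemma eis_irred:
  fixes E Q :: "int poly"
  assumes E: "E = monom 1 d + smult 2 Q" and dE: "degree E = d" and d0: "d > 0"
    and lc: "lead_coeff E = 1" and c0: "coeff E 0 mod 4 = 2"
  shows "irreducible E"
proof (rule irreducibleI)
  show "E \<noteq> 0" using dE d0 by auto
  show "\<not> is_unit E" using dE d0 by (auto simp: is_unit_poly_iff)
  have ceven: "even (coeff E m)" if "m < d" for m
    using that by (simp add: E coeff_monom)
  have chigh: "coeff E m = 0" if "m > d" for m
    using that dE by (simp add: coeff_eq_0)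
  fix A B assume AB: "E = A * B"
  show "is_unit A \<or> is_unit B"
  proof (rule ccontr)
    assume nu: "\<not> (is_unit A \<or> is_unit B)"
    have A0: "A \<noteq> 0" and B0: "B \<noteq> 0" using AB \<open>E \<noteq> 0\<close> by auto
    have lcAB: "lead_coeff A * lead_coeff B = 1" using AB lc by (simp add: lead_coeff_mult)
    have dA: "degree A > 0"
    proof (rule ccontr)
      assume "\<not> degree A > 0"
      then have "A = [:lead_coeff A:]" using degree_0_id[of A] by simp
      moreover have "lead_coeff A dvd 1" using lcAB by (metis dvdI)
      ultimately have "is_unit A" by (metis is_unit_poly_iff)
      with nu show False by blast
    qed
    have dB: "degree B > 0"
    proof (rule ccontr)
      assume "\<not> degree B > 0"
      then have "B = [:lead_coeff B:]" using degree_0_id[of B] by simp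
      moreover have "lead_coeff B dvd 1" using lcAB by (metis dvdI mult.commute)
      ultimately have "is_unit B" by (metis is_unit_poly_iff)
      with nu show False by blast
    qed
    have dsum: "degree A + degree B = d" using AB dE A0 B0 by (simp add: degree_mult_eq)
    have oA: "odd (lead_coeff A)"
    proof
      assume "even (lead_coeff A)"
      then have "even (lead_coeff A * lead_coeff B)" by simp
      with lcAB show False by simp
    qed
    obtain i where i: "odd (coeff A i)" "\<And>k. k < i \<Longrightarrow> even (coeff A k)" "i \<le> degree A"
      using least_odd_coeff[OF oA] by blast
    have oB: "odd (lead_coeff B)"
    proof
      assume "even (lead_coeff B)"
      then have "even (lead_coeff A * lead_coeff B)" by simp
      with lcAB show False by simp
    qed
    obtain j where j: "odd (coeff B j)" "\<And>k. k < j \<Longrightarrow> even (coeff B k)" "j \<le> degree B"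
      using least_odd_coeff[OF oB] by blast
    have "coeff E (i + j) = (\<Sum>k\<le>i+j. coeff A k * coeff B (i + j - k))"
      by (simp add: AB coeff_mult)
    also have "\<dots> = coeff A i * coeff B j + (\<Sum>k\<in>{..i+j} - {i}. coeff A k * coeff B (i + j - k))"
      by (subst sum.remove[of _ i]) auto
    finally have ce: "coeff E (i + j) = coeff A i * coeff B j + (\<Sum>k\<in>{..i+j} - {i}. coeff A k * coeff B (i + j - k))" .
    have "even (\<Sum>k\<in>{..i+j} - {i}. coeff A k * coeff B (i + j - k))"
    proof (rule dvd_sum)
      fix k assume k: "k \<in> {..i+j} - {i}"
      show "2 dvd coeff A k * coeff B (i + j - k)"
      proof (cases "k < i")
        case True then show ?thesis using i(2) by simp
      next
        case False
        with k have "i + j - k < j" by auto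
        then show ?thesis using j(2) by simp
      qed
    qed
    with ce i(1) j(1) have "odd (coeff E (i + j))" by simp
    then have "i + j = d" using ceven chigh by (metis linorder_neqE_nat even_zero)
    then have "i = degree A" "j = degree B" using dsum i(3) j(3) by auto
    then have "even (coeff A 0)" "even (coeff B 0)" using i(2) j(2) dA dB by auto
    then have "4 dvd coeff A 0 * coeff B 0" by (auto elim!: evenE)
    moreover have "coeff E 0 = coeff A 0 * coeff B 0" by (simp add: AB coeff_mult)
    ultimately show False using c0 by simp
  qed
qed



lemma common_root:
  fixes E g :: "int poly"
  assumes irr: "irreducible E" and Ea: "ev \<alpha> E = 0" and Eb: "ev \<beta> E = 0" and ga: "ev \<alpha> g = 0"
  shows "ev \<beta> g = 0"
proof -
  define S where "S = {m::int poly. m \<noteq> 0 \<and> ev \<alpha> m = 0}"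
  have E0: "E \<noteq> 0" using irr by auto
  have "E \<in> S" using E0 Ea by (simp add: S_def)
  define d0 where "d0 = (LEAST d. \<exists>m\<in>S. degree m = d)"
  have "\<exists>m\<in>S. degree m = d0" unfolding d0_def by (rule LeastI[of _ "degree E"]) (use \<open>E \<in> S\<close> in blast)
  then obtain m where mS: "m \<in> S" and dm: "degree m = d0" by blast
  have mmin: "d0 \<le> degree m'" if "m' \<in> S" for m'
    unfolding d0_def by (rule Least_le) (use that in blast)
  have m0: "m \<noteq> 0" and ma: "ev \<alpha> m = 0" using mS by (auto simp: S_def)
  have div: "\<exists>a q. a \<noteq> 0 \<and> smult a h = m * q" if hA: "ev \<alpha> h = 0" for h
  proof -
    define r where "r = pseudo_mod h m"
    obtain a q where aq: "a \<noteq> 0" "smult a h = m * q + r"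
      using pseudo_mod(1)[OF m0, of h] unfolding r_def by blast
    have rd: "r = 0 \<or> degree r < degree m" using pseudo_mod(2)[OF m0, of h] unfolding r_def by blast
    have "ev \<alpha> (smult a h) = ev \<alpha> (m * q + r)" using aq(2) by simp
    then have "ev \<alpha> r = 0" using hA ma by simp
    have "r = 0"
    proof (rule ccontr)
      assume "r \<noteq> 0"
      then have "r \<in> S" using \<open>ev \<alpha> r = 0\<close> by (simp add: S_def)
      then have "d0 \<le> degree r" by (rule mmin)
      with rd \<open>r \<noteq> 0\<close> dm show False by simp
    qed
    with aq show ?thesis by auto
  qed
  have pE: "prime_elem E" using irr by (rule irreducible_imp_prime_elem)
  obtain a q where aq: "a \<noteq> 0" "smult a E = m * q" using div[OF Ea] by blast
  have "E dvd m * q" unfolding aq(2)[symmetric] by (simp add: dvd_smult)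
  then have "E dvd m \<or> E dvd q" using pE by (simp add: prime_elem_dvd_mult_iff)
  then have mb: "ev \<beta> m = 0"
  proof
    assume "E dvd m"
    then obtain h where "m = E * h" by (elim dvdE)
    then show ?thesis using Eb by simp
  next
    assume "E dvd q"
    then obtain h where h: "q = E * h" by (elim dvdE)
    have "E * [:a:] = [:a:] * E" by (simp add: mult.commute)
    also have "\<dots> = smult a E" by simp
    also have "\<dots> = E * (m * h)" using aq(2) unfolding h by (simp add: algebra_simps)
    finally have "E * [:a:] = E * (m * h)" .
    then have "[:a:] = m * h" using mult_left_cancel[OF E0] by blast
    then have "degree m = 0" using aq(1) m0
      by (metis add_eq_0_iff_both_eq_0 degree_mult_eq degree_pCons_0 mult_zero_right pCons_eq_0_iff)
    then have "m = [:coeff m 0:]" using degree_0_id[of m] by simp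
    then have "ev \<alpha> m = of_int (coeff m 0)" by (metis ev_const)
    with ma have "coeff m 0 = 0" by simp
    with \<open>m = [:coeff m 0:]\<close> m0 show ?thesis by simp
  qed
  obtain a' q' where aq': "a' \<noteq> 0" "smult a' g = m * q'" using div[OF ga] by blast
  have "ev \<beta> (smult a' g) = 0" unfolding aq'(2) using mb by simp
  then show ?thesis using aq'(1) by simp
qed

fun itp :: "int poly \<Rightarrow> nat \<Rightarrow> int poly" where
  "itp L 0 = L"
| "itp L (Suc j) = pcompose (itp L j) L"

lemma pow_mod2: "\<exists>R. (X + smult 2 Y) ^ d = X ^ d + smult 2 (R :: int poly)"
proof (induction d)
  case 0 then show ?case by (intro exI[of _ 0]) simp
next
  case (Suc d)
  then obtain R where R: "(X + smult 2 Y) ^ d = X ^ d + smult 2 R" by blast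
  show ?case
    by (intro exI[of _ "X ^ d * Y + R * X + smult 2 (R * Y)"]) (simp add: R algebra_simps smult_add_right)
qed

lemma pcompose_monom1: "pcompose (monom 1 d) L = L ^ d"
  by (induction d) (simp_all add: monom_Suc monom_0 pcompose_pCons)

lemma itp_form:
  assumes L: "L = monom 1 2 + smult 2 l" and dL: "degree L = 2" and lL: "lead_coeff L = 1"
  shows "(\<exists>Q. itp L j = monom 1 (2 ^ Suc j) + smult 2 Q) \<and> degree (itp L j) = 2 ^ Suc j \<and> lead_coeff (itp L j) = 1"
proof (induction j)
  case 0 then show ?case using L dL lL by auto
next
  case (Suc j)
  then obtain Q where Q: "itp L j = monom 1 (2 ^ Suc j) + smult 2 Q" by blast
  obtain R where R: "(monom 1 2 + smult 2 l) ^ (2 ^ Suc j) = (monom 1 2) ^ (2 ^ Suc j) + smult 2 R"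
    using pow_mod2 by blast
  have "itp L (Suc j) = L ^ (2 ^ Suc j) + smult 2 (pcompose Q L)"
    by (simp add: Q pcompose_add pcompose_smult pcompose_monom1)
  also have "\<dots> = monom 1 (2 ^ Suc (Suc j)) + smult 2 (R + pcompose Q L)"
    unfolding L R by (simp add: monom_power algebra_simps smult_add_right)
  finally have 1: "\<exists>Q. itp L (Suc j) = monom 1 (2 ^ Suc (Suc j)) + smult 2 Q" by blast
  have 2: "degree (itp L (Suc j)) = 2 ^ Suc (Suc j)" using Suc dL by (simp add: degree_pcompose)
  have "lead_coeff (itp L (Suc j)) = lead_coeff (itp L j) * lead_coeff L ^ degree (itp L j)"
    unfolding itp.simps by (rule lead_coeff_comp) (simp add: dL)
  moreover have "lead_coeff (itp L j) = 1" using Suc.IH by blast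
  ultimately have 3: "lead_coeff (itp L (Suc j)) = 1" using lL by (simp only: mult_1 power_one)
  show ?case using 1 2 3 by blast
qed

lemma poly_itp_Suc: "poly (itp L (Suc j)) x = poly (itp L j) (poly L x)"
  by (simp add: poly_pcompose)

lemma poly_itp_fix: "poly L a = a \<Longrightarrow> poly (itp L j) a = a"
  by (induction j) (simp_all add: poly_pcompose)

lemma ev_itp_Suc: "ev x (itp L (Suc j)) = ev (ev x L) (itp L j)"
  by simp

definition La :: "int poly" where "La = [:-2, 0, 1:]"
definition Lb :: "int poly" where "Lb = [:-2, 2, 1:]"

lemma La_form: "La = monom 1 2 + smult 2 [:-1:]" "degree La = 2" "lead_coeff La = 1"
  by (simp_all add: La_def numeral_2_eq_2 monom_Suc monom_0)

lemma Lb_form: "Lb = monom 1 2 + smult 2 [:-1, 1:]" "degree Lb = 2" "lead_coeff Lb = 1"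
  by (simp_all add: Lb_def numeral_2_eq_2 monom_Suc monom_0)

lemma itpa_m2: "poly (itp La j) (-2) = 2"
proof (cases j)
  case 0 then show ?thesis by (simp add: La_def)
next
  case (Suc i)
  have "poly La (-2) = 2" "poly La 2 = 2" by (simp_all add: La_def)
  then show ?thesis using Suc poly_itp_fix[of La 2 i] by (simp add: poly_pcompose)
qed

lemma itpa_c0: "coeff (itp La j) 0 mod 4 = 2"
proof (cases j)
  case 0 then show ?thesis by (simp add: La_def)
next
  case (Suc i)
  have "coeff (itp La j) 0 = poly (itp La i) (poly La 0)" by (simp add: Suc poly_0_coeff_0[symmetric] poly_pcompose)
  also have "poly La 0 = -2" by (simp add: La_def)
  finally show ?thesis using itpa_m2 by simp
qed

lemma itpb_m2: "poly (itp Lb j) (-2) = -2"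
  by (rule poly_itp_fix) (simp add: Lb_def)

lemma itpb_c0: "coeff (itp Lb j) 0 mod 4 = 2"
proof (cases j)
  case 0 then show ?thesis by (simp add: Lb_def)
next
  case (Suc i)
  have "coeff (itp Lb j) 0 = poly (itp Lb i) (poly Lb 0)" by (simp add: Suc poly_0_coeff_0[symmetric] poly_pcompose)
  also have "poly Lb 0 = -2" by (simp add: Lb_def)
  finally show ?thesis using itpb_m2 by simp
qed

lemma irr_a: "irreducible (itp La j)"
proof -
  note f = itp_form[OF La_form, of j]
  then obtain Q where Q: "itp La j = monom 1 (2 ^ Suc j) + smult 2 Q" by blast
  show ?thesis by (rule eis_irred[OF Q]) (use f itpa_c0 in auto)
qed

lemma irr_b: "irreducible (itp Lb j)"
proof -
  note f = itp_form[OF Lb_form, of j]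
  then obtain Q where Q: "itp Lb j = monom 1 (2 ^ Suc j) + smult 2 Q" by blast
  show ?thesis by (rule eis_irred[OF Q]) (use f itpb_c0 in auto)
qed



lemma cos_add_2pi_nat: "cos (y + 2 * pi * real q) = cos y"
proof (induction q)
  case 0 then show ?case by simp
next
  case (Suc q)
  have "y + 2 * pi * real (Suc q) = (y + 2 * pi * real q) + 2 * pi" by (simp add: algebra_simps)
  then show ?case using Suc by (simp only: cos_periodic)
qed

lemma th4_odd: assumes "odd k" shows "th 4 k = 0"
proof -
  have "cos (2 * pi * real k / real 4) = 0"
    unfolding cos_zero_iff_int
    by (rule exI[of _ "int k"]) (use assms in auto)
  then show ?thesis by (simp add: th_cos)
qed

lemma th6_cop: assumes "coprime k (12::nat)" shows "th 6 k = 1"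
proof -
  have "\<not> 2 dvd k"
  proof
    assume "2 dvd k"
    moreover have "(2::nat) dvd 12" by simp
    ultimately have "is_unit (2::nat)" using assms coprime_common_divisor by blast
    then show False by simp
  qed
  moreover have "\<not> 3 dvd k"
  proof
    assume "3 dvd k"
    moreover have "(3::nat) dvd 12" by simp
    ultimately have "is_unit (3::nat)" using assms coprime_common_divisor by blast
    then show False by simp
  qed
  ultimately have r: "k mod 6 = 1 \<or> k mod 6 = 5" by presburger
  define q where "q = k div 6"
  have kq: "real k = 6 * real q + real (k mod 6)"
    unfolding q_def by (metis div_mult_mod_eq of_nat_add of_nat_mult of_nat_numeral mult.commute)
  have "2 * pi * real k / real 6 = 2 * pi * real (k mod 6) / 6 + 2 * pi * real q"
    unfolding kq by (simp add: field_simps)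
  then have c: "cos (2 * pi * real k / real 6) = cos (2 * pi * real (k mod 6) / 6)"
    by (simp only: cos_add_2pi_nat)
  have "cos (2 * pi * real (k mod 6) / 6) = 1 / 2"
    using r
  proof
    assume "k mod 6 = 1"
    then show ?thesis using cos_60 by simp
  next
    assume "k mod 6 = 5"
    then have "2 * pi * real (k mod 6) / 6 = 2 * pi - pi / 3" by simp
    then show ?thesis using cos_60 by (simp only: cos_2pi_minus)
  qed
  with c have h6: "cos (2 * pi * real k / real 6) = 1 / 2" by simp
  show ?thesis unfolding th_cos h6 by simp
qed

lemma ev_La: "ev t La = t ^ 2 - 2" by (simp add: La_def power2_eq_square)
lemma ev_Lb: "ev (t - 1) Lb = t ^ 2 - 3" by (simp add: Lb_def power2_eq_square algebra_simps)

lemma cop_down: "coprime k (2 ^ Suc j * n) \<Longrightarrow> coprime k (2 ^ j * (n::nat))"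
  by (simp add: coprime_mult_right_iff)

lemma th_down: "th (2 ^ Suc j * n) k ^ 2 - 2 = th (2 ^ j * n) k" if "n > 0"
  using th_double[of "2 ^ j * n" k] that by (simp add: mult.assoc)

lemma roots_a: "coprime k (2 ^ j * 8) \<Longrightarrow> ev (th (2 ^ j * 8) k) (itp La j) = 0"
proof (induction j arbitrary: k)
  case 0
  have "odd k"
  proof
    assume "even k"
    moreover have "(2::nat) dvd 2 ^ 0 * 8" by simp
    ultimately have "is_unit (2::nat)" using 0 coprime_common_divisor by blast
    then show False by simp
  qed
  have "th (2 * 4) k ^ 2 - 2 = th 4 k" by (rule th_double) simp
  then show ?case using th4_odd[OF \<open>odd k\<close>] by (simp add: ev_La)
next
  case (Suc j)
  have "ev (th (2 ^ Suc j * 8) k) (itp La (Suc j)) = ev (th (2 ^ j * 8) k) (itp La j)"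
    by (simp only: ev_itp_Suc ev_La th_down[of 8] zero_less_numeral)
  then show ?case using Suc.IH[OF cop_down[OF Suc.prems]] by simp
qed

lemma roots_b: "coprime k (2 ^ j * 12) \<Longrightarrow> ev (th (2 ^ j * 12) k - 1) (itp Lb j) = 0"
proof (induction j arbitrary: k)
  case 0
  have "th (2 * 6) k ^ 2 - 2 = th 6 k" by (rule th_double) simp
  then have "th 12 k ^ 2 - 2 = 1" using th6_cop[of k] 0 by simp
  then show ?case by (simp add: ev_Lb)
next
  case (Suc j)
  have "ev (th (2 ^ Suc j * 12) k - 1) (itp Lb (Suc j)) = ev (th (2 ^ Suc j * 12) k ^ 2 - 2 - 1) (itp Lb j)"
    by (simp add: ev_itp_Suc ev_Lb del: itp.simps)
  also have "\<dots> = ev (th (2 ^ j * 12) k - 1) (itp Lb j)"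
    by (simp only: th_down[of 12] zero_less_numeral)
  finally show ?case using Suc.IH[OF cop_down[OF Suc.prems]] by simp
qed

definition good :: "nat \<Rightarrow> bool" where
  "good n \<longleftrightarrow> (\<forall>k\<in>emb_idx n. \<forall>g. ev (theta n) g = 0 \<longrightarrow> ev (th n k) g = 0)"

lemma good_a: "good (2 ^ j * 8)"
  unfolding good_def
proof (intro ballI allI impI)
  fix k g assume k: "k \<in> emb_idx (2 ^ j * 8)" and g: "ev (theta (2 ^ j * 8)) g = 0"
  show "ev (th (2 ^ j * 8) k) g = 0"
  proof (rule common_root[OF irr_a])
    show "ev (th (2 ^ j * 8) 1) (itp La j) = 0" by (rule roots_a) simp
    show "ev (th (2 ^ j * 8) k) (itp La j) = 0" by (rule roots_a) (use k in \<open>simp add: emb_idx_def\<close>)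
    show "ev (th (2 ^ j * 8) 1) g = 0" using g by (simp add: theta_th)
  qed
qed

lemma good_b: "good (2 ^ j * 12)"
  unfolding good_def
proof (intro ballI allI impI)
  fix k g assume k: "k \<in> emb_idx (2 ^ j * 12)" and g: "ev (theta (2 ^ j * 12)) g = 0"
  have sh: "ev (x - 1) (pcompose g [:1, 1:]) = ev x g" for x by simp
  have "ev (th (2 ^ j * 12) k - 1) (pcompose g [:1, 1:]) = 0"
  proof (rule common_root[OF irr_b])
    show "ev (th (2 ^ j * 12) 1 - 1) (itp Lb j) = 0" by (rule roots_b) simp
    show "ev (th (2 ^ j * 12) k - 1) (itp Lb j) = 0" by (rule roots_b) (use k in \<open>simp add: emb_idx_def\<close>)
    show "ev (th (2 ^ j * 12) 1 - 1) (pcompose g [:1, 1:]) = 0" using g by (simp only: sh theta_th)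
  qed
  then show "ev (th (2 ^ j * 12) k) g = 0" by (simp only: sh)
qed

lemma conj_ev:
  assumes "good n" "k \<in> emb_idx n"
  shows "conj_emb n k (ev (theta n) f) = ev (th n k) f"
proof -
  define p0 where "p0 = (SOME p :: int poly. ev (theta n) f = poly (map_poly of_int p) (theta n))"
  have "ev (theta n) f = poly (map_poly of_int p0) (theta n)"
    unfolding p0_def by (rule someI[of _ f]) (simp add: ev_def)
  then have "ev (theta n) f = ev (theta n) p0" by (simp add: ev_def)
  then have "ev (theta n) (p0 - f) = 0" by simp
  then have "ev (th n k) (p0 - f) = 0" using assms unfolding good_def by blast
  then have "ev (th n k) p0 - ev (th n k) f = 0" by (simp only: ev_diff)
  then have "ev (th n k) p0 = ev (th n k) f" by simp
  moreover have "conj_emb n k (ev (theta n) f) = ev (th n k) p0"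
    unfolding conj_emb_def p0_def by (simp add: ev_def th_def)
  ultimately show ?thesis by simp
qed

lemma normF_ev:
  assumes "good n"
  shows "normF n (ev (theta n) f) = (\<Prod>k\<in>emb_idx n. ev (th n k) f)"
  unfolding normF_def using conj_ev[OF assms] by simp



lemma Oring_simps [simp]:
  "carrier (Oring n) = Ocyc n" "x \<otimes>\<^bsub>Oring n\<^esub> y = x * y" "x \<oplus>\<^bsub>Oring n\<^esub> y = x + y"
  "\<one>\<^bsub>Oring n\<^esub> = 1" "\<zero>\<^bsub>Oring n\<^esub> = 0"
  by (simp_all add: Oring_def)

lemma Oc_ev [simp, intro]: "ev (theta n) f \<in> Ocyc n"
  by (auto simp: Ocyc_iff)

lemma Oc_comp: assumes "x \<in> Ocyc n" shows "ev x g \<in> Ocyc n"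
proof -
  obtain f where "x = ev (theta n) f" using assms by (auto simp: Ocyc_iff)
  then have "ev x g = ev (theta n) (pcompose g f)" by simp
  then show ?thesis by (simp only: Oc_ev)
qed

lemma Oc_add [intro]: "x \<in> Ocyc n \<Longrightarrow> y \<in> Ocyc n \<Longrightarrow> x + y \<in> Ocyc n"
proof -
  assume "x \<in> Ocyc n" "y \<in> Ocyc n"
  then obtain f g where "x = ev (theta n) f" "y = ev (theta n) g" by (auto simp: Ocyc_iff)
  then have "x + y = ev (theta n) (f + g)" by simp
  then show ?thesis by (simp only: Oc_ev)
qed

lemma Oc_mult [intro]: "x \<in> Ocyc n \<Longrightarrow> y \<in> Ocyc n \<Longrightarrow> x * y \<in> Ocyc n"
proof -
  assume "x \<in> Ocyc n" "y \<in> Ocyc n"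
  then obtain f g where "x = ev (theta n) f" "y = ev (theta n) g" by (auto simp: Ocyc_iff)
  then have "x * y = ev (theta n) (f * g)" by simp
  then show ?thesis by (simp only: Oc_ev)
qed

lemma Oc_int [intro, simp]: "of_int m \<in> Ocyc n"
proof -
  have "of_int m = ev (theta n) [:m:]" by simp
  then show ?thesis by (metis Oc_ev)
qed

lemma Oc_0 [simp]: "0 \<in> Ocyc n" using Oc_int[of 0 n] by simp
lemma Oc_1 [simp]: "1 \<in> Ocyc n" using Oc_int[of 1 n] by simp
lemma Oc_2 [simp]: "2 \<in> Ocyc n" using Oc_int[of 2 n] by simp

lemma Oc_uminus [intro]: assumes "x \<in> Ocyc n" shows "- x \<in> Ocyc n"
proof -
  have "- x = of_int (-1) * x" by simp
  then show ?thesis using Oc_mult[OF Oc_int assms] by (simp only:)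
qed

lemma Oc_diff [intro]: "x \<in> Ocyc n \<Longrightarrow> y \<in> Ocyc n \<Longrightarrow> x - y \<in> Ocyc n"
  using Oc_add[of x n "-y"] Oc_uminus[of y n] by simp

lemma Oc_pow [intro]: "x \<in> Ocyc n \<Longrightarrow> x ^ d \<in> Ocyc n"
  by (induction d) auto

lemma cring_O: "cring (Oring n)"
proof (rule cringI)
  show "abelian_group (Oring n)"
    by (rule abelian_groupI) (auto simp: algebra_simps intro!: bexI[of _ "- _"])
  show "comm_monoid (Oring n)"
    by (rule comm_monoidI) (auto simp: algebra_simps)
qed (auto simp: algebra_simps)

lemma PIdl_O: "PIdl\<^bsub>Oring n\<^esub> p = {x * p | x. x \<in> Ocyc n}"
  by (simp add: cgenideal_def)

lemma prime_pow:
  assumes "primeideal P (Oring n)" "a \<in> Ocyc n" "a ^ Suc d \<in> P"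
  shows "a \<in> P"
  using assms(3)
proof (induction d)
  case 0 then show ?case by simp
next
  case (Suc d)
  have "a * a ^ Suc d \<in> P" using Suc.prems by simp
  then have "a \<in> P \<or> a ^ Suc d \<in> P"
    using primeideal.I_prime[OF assms(1), of a "a ^ Suc d"] assms(2) by auto
  then show ?case using Suc.IH by blast
qed



lemma prime_main:
  assumes aO: "\<alpha> \<in> Ocyc n"
    and E: "E = monom 1 d + smult 2 Q" "d > 0" "ev \<alpha> E = 0"
    and Em2: "poly E (-2) = 2 \<or> poly E (-2) = -2"
    and p: "p = \<alpha> + 2"
    and th: "theta n = p + of_int c"
    and one: "1 \<notin> PIdl\<^bsub>Oring n\<^esub> p"
  shows "prime_above_2 n = PIdl\<^bsub>Oring n\<^esub> p"
proof -
  define I where "I = PIdl\<^bsub>Oring n\<^esub> p"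
  have I: "I = {x * p | x. x \<in> Ocyc n}" unfolding I_def by (rule PIdl_O)
  have pO: "p \<in> Ocyc n" using aO p by auto
  obtain y2 where y2: "y2 \<in> Ocyc n" "2 = y2 * p"
  proof -
    obtain e R where eR: "pcompose E [:-2, 1:] = pCons e R" by (rule pCons_cases)
    have "e = coeff (pcompose E [:-2, 1:]) 0" using eR by simp
    also have "\<dots> = poly E (-2)" by (simp add: poly_0_coeff_0[symmetric] poly_pcompose)
    finally have e: "e = 2 \<or> e = -2" using Em2 by simp
    have "ev p [:-2, 1:] = \<alpha>" using p by simp
    then have "0 = ev p (pcompose E [:-2, 1:])" using E(3) by simp
    also have "\<dots> = of_int e + p * ev p R" using eR by simp
    finally have ee: "of_int e = - (p * ev p R)" by (simp add: eq_neg_iff_add_eq_0 add.commute)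
    have RO: "ev p R \<in> Ocyc n" using pO by (rule Oc_comp)
    from e show ?thesis
    proof
      assume "e = 2"
      then have "2 = (- ev p R) * p" using ee by (simp add: mult.commute)
      then show ?thesis using that RO by blast
    next
      assume "e = -2"
      then have "2 = (ev p R) * p" using ee by (simp add: mult.commute)
      then show ?thesis using that RO by blast
    qed
  qed
  have red: "\<exists>r. (r = 0 \<or> r = 1) \<and> (\<exists>w\<in>Ocyc n. x - of_int r = w * p)" if xO: "x \<in> Ocyc n" for x
  proof -
    obtain f where f: "x = ev (theta n) f" using xO by (auto simp: Ocyc_iff)
    obtain a R where aR: "pcompose f [:c, 1:] = pCons a R" by (rule pCons_cases)
    have "ev p [:c, 1:] = theta n" using th by simp
    then have "x = ev p (pcompose f [:c, 1:])" using f by simp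
    also have "\<dots> = of_int a + p * ev p R" using aR by simp
    finally have xa: "x = of_int a + p * ev p R" .
    have "a = 2 * (a div 2) + a mod 2" by simp
    then have "(of_int a :: complex) = of_int (2 * (a div 2) + a mod 2)" by (rule arg_cong)
    then have "(of_int a :: complex) = 2 * of_int (a div 2) + of_int (a mod 2)"
      by (simp only: of_int_add of_int_mult of_int_numeral)
    then have x1: "x - of_int (a mod 2) = 2 * of_int (a div 2) + p * ev p R"
      using xa by simp
    have x2: "(y2 * of_int (a div 2) + ev p R) * p = (y2 * p) * of_int (a div 2) + p * ev p R"
      by (simp add: algebra_simps)
    have "x - of_int (a mod 2) = (y2 * of_int (a div 2) + ev p R) * p"
      unfolding x1 x2 y2(2)[symmetric] ..
    moreover have "y2 * of_int (a div 2) + ev p R \<in> Ocyc n" by (intro Oc_add Oc_mult y2(1) Oc_int Oc_comp pO)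
    moreover have "a mod 2 = 0 \<or> a mod 2 = 1" by presburger
    ultimately show ?thesis by (intro exI[of _ "a mod 2"] conjI bexI[of _ "y2 * of_int (a div 2) + ev p R"])
  qed
  have cr: "cring (Oring n)" by (rule cring_O)
  have idI: "ideal I (Oring n)" unfolding I_def by (rule cring.cgenideal_ideal[OF cr]) (simp add: pO)
  have primeI: "primeideal I (Oring n)"
  proof (rule primeidealI[OF idI cr])
    show "carrier (Oring n) \<noteq> I"
    proof
      assume "carrier (Oring n) = I"
      then have "Ocyc n = I" by simp
      then show False using one I_def Oc_1[of n] by blast
    qed
    fix a b assume a: "a \<in> carrier (Oring n)" and b: "b \<in> carrier (Oring n)" and ab: "a \<otimes>\<^bsub>Oring n\<^esub> b \<in> I"
    show "a \<in> I \<or> b \<in> I"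
    proof (rule ccontr)
      assume nab: "\<not> (a \<in> I \<or> b \<in> I)"
      have aO: "a \<in> Ocyc n" and bO: "b \<in> Ocyc n" using a b by simp_all
      obtain ra u where ra: "ra = 0 \<or> ra = 1" "u \<in> Ocyc n" "a - of_int ra = u * p" using red[OF aO] by blast
      obtain rb v where rb: "rb = 0 \<or> rb = 1" "v \<in> Ocyc n" "b - of_int rb = v * p" using red[OF bO] by blast
      have "a * b \<in> I" using ab by simp
      then obtain w where w: "w \<in> Ocyc n" "a * b = w * p" unfolding I by blast
      have "ra \<noteq> 0"
      proof
        assume "ra = 0"
        then have "a = u * p" using ra by simp
        then have "a \<in> I" unfolding I using ra(2) by blast
        with nab show False by blast
      qed
      then have ra1: "a = 1 + u * p" using ra by (simp add: algebra_simps)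
      have "rb \<noteq> 0"
      proof
        assume "rb = 0"
        then have "b = v * p" using rb by simp
        then have "b \<in> I" unfolding I using rb(2) by blast
        with nab show False by blast
      qed
      then have rb1: "b = 1 + v * p" using rb by (simp add: algebra_simps)
      have "1 = (w - u - v - u * v * p) * p" using w(2) unfolding ra1 rb1 by (simp add: algebra_simps)
      moreover have "w - u - v - u * v * p \<in> Ocyc n" using w(1) ra(2) rb(2) pO by auto
      ultimately have "1 \<in> I" unfolding I by blast
      then show False using one I_def by simp
    qed
  qed
  have twoI: "2 \<in> I" unfolding I using y2 by blast
  show ?thesis
    unfolding prime_above_2_def I_def[symmetric]
  proof (rule the_equality)
    show "primeideal I (Oring n) \<and> 2 \<in> I" using primeI twoI by blast
    fix P assume P: "primeideal P (Oring n) \<and> 2 \<in> P"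
    then have pP: "primeideal P (Oring n)" and tP: "2 \<in> P" by auto
    have idP: "ideal P (Oring n)" using pP by (simp add: primeideal_def)
    have Psub: "P \<subseteq> Ocyc n" using ideal.Icarr[OF idP] by (simp add: subset_iff)
    have lcl: "x * y \<in> P" if "x \<in> Ocyc n" "y \<in> P" for x y
      using ideal.I_l_closed[OF idP, of y x] that by simp
    have acl: "x + y \<in> P" if "x \<in> P" "y \<in> P" for x y
      using additive_subgroup.a_closed[OF ideal.axioms(1)[OF idP] that] by simp
    have "\<alpha> ^ d = - (2 * ev \<alpha> Q)" using E(1,3) by (simp add: eq_neg_iff_add_eq_0)
    also have "\<dots> = (- ev \<alpha> Q) * 2" by simp
    finally have "\<alpha> ^ d \<in> P" using lcl[OF _ tP, of "- ev \<alpha> Q"] Oc_comp[OF aO, of Q] by auto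
    then have aP: "\<alpha> \<in> P" using prime_pow[OF pP aO, of "d - 1"] E(2) by simp
    have pinP: "p \<in> P" using acl[OF aP tP] p by simp
    have sub1: "I \<subseteq> P" unfolding I using lcl[OF _ pinP] by blast
    have sub2: "P \<subseteq> I"
    proof
      fix x assume xP: "x \<in> P"
      then have xO: "x \<in> Ocyc n" using Psub by auto
      obtain r w where rw: "r = 0 \<or> r = 1" "w \<in> Ocyc n" "x - of_int r = w * p" using red[OF xO] by auto
      show "x \<in> I"
      proof (cases "r = 0")
        case True
        then have "x = w * p" using rw by simp
        then show ?thesis unfolding I using rw(2) by blast
      next
        case False
        then have "x - 1 = w * p" using rw by simp
        then have "x - 1 \<in> I" unfolding I using rw(2) by blast
        then have "x - 1 \<in> P" using sub1 by blast
        then have "(-1) * (x - 1) \<in> P" by (rule lcl[OF Oc_uminus[OF Oc_1]])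
        then have "x + (-1) * (x - 1) \<in> P" using acl xP by blast
        then have "1 \<in> P" by simp
        then have "P = carrier (Oring n)" using ideal.one_imp_carrier[OF idP] by simp
        then show ?thesis using primeideal.I_notcarr[OF pP] by simp
      qed
    qed
    show "P = I" using sub1 sub2 by blast
  qed
qed



lemma normF_mult:
  assumes "good n"
  shows "normF n (ev (theta n) f * ev (theta n) g) = normF n (ev (theta n) f) * normF n (ev (theta n) g)"
proof -
  have "normF n (ev (theta n) f * ev (theta n) g) = normF n (ev (theta n) (f * g))" by simp
  also have "\<dots> = (\<Prod>k\<in>emb_idx n. ev (th n k) f * ev (th n k) g)" unfolding normF_ev[OF assms] by (simp only: ev_mult)
  also have "\<dots> = normF n (ev (theta n) f) * normF n (ev (theta n) g)"
    using normF_ev[OF assms] by (simp add: prod.distrib)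
  finally show ?thesis .
qed

lemma normF_1: assumes "good n" shows "normF n 1 = 1"
  using normF_ev[OF assms, of 1] by simp

lemma sq_mod3: "(a::int)^2 mod 3 = 0 \<or> a^2 mod 3 = 1"
proof -
  have "a^2 mod 3 = (a mod 3)^2 mod 3" by (simp add: power_mod)
  moreover have "a mod 3 = 0 \<or> a mod 3 = 1 \<or> a mod 3 = 2" by presburger
  ultimately show ?thesis by auto
qed

lemma no_m1: "(a::int)^2 - 3 * b^2 \<noteq> -1"
proof
  assume h: "a^2 - 3 * b^2 = -1"
  define s where "s = a^2"
  define t where "t = b^2"
  have "s mod 3 = 0 \<or> s mod 3 = 1" unfolding s_def by (rule sq_mod3)
  moreover have "s - 3 * t = -1" using h by (simp add: s_def t_def)
  ultimately show False by presburger
qed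

lemma no_2: "(a::int)^2 - 3 * b^2 \<noteq> 2"
proof
  assume h: "a^2 - 3 * b^2 = 2"
  define s where "s = a^2"
  define t where "t = b^2"
  have "s mod 3 = 0 \<or> s mod 3 = 1" unfolding s_def by (rule sq_mod3)
  moreover have "s - 3 * t = 2" using h by (simp add: s_def t_def)
  ultimately show False by presburger
qed

lemma one_notin:
  assumes g: "good n" and nf: "\<And>f. \<exists>a b. normF n (ev (theta n) f) = of_int (a^2 - D * b^2)"
    and np: "normF n (ev (theta n) q) = of_int c" and c: "even c"
  shows "1 \<notin> PIdl\<^bsub>Oring n\<^esub> (ev (theta n) q)"
proof
  assume "1 \<in> PIdl\<^bsub>Oring n\<^esub> (ev (theta n) q)"
  then obtain y where y: "y \<in> Ocyc n" "1 = y * ev (theta n) q" by (auto simp: PIdl_O)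
  then obtain f where f: "y = ev (theta n) f" by (auto simp: Ocyc_iff)
  obtain a b where ab: "normF n (ev (theta n) f) = of_int (a^2 - D * b^2)" using nf by blast
  have "1 = normF n (ev (theta n) f * ev (theta n) q)" using y f normF_1[OF g] by simp
  also have "\<dots> = of_int ((a^2 - D * b^2) * c)" using normF_mult[OF g] ab np by simp
  finally have "(a^2 - D * b^2) * c = 1" by (metis of_int_eq_1_iff)
  then have "even (1::int)" using c by (metis dvd_mult)
  then show False by simp
qed

lemma th_real_pos:
  assumes "k \<in> emb_idx n"
  shows "2 + th n k \<in> \<real> \<and> Re (2 + th n k) > 0"
proof -
  have k: "0 < k" "2 * k < n" using assms by (auto simp: emb_idx_def)
  have "2 * pi * real k / real n < pi"
  proof -
    have "real (2 * k) < real n" using k(2) by linarith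
    then have "2 * real k / real n < 1" using k by (simp add: field_simps)
    then have "pi * (2 * real k / real n) < pi * 1" by (intro mult_strict_left_mono) auto
    moreover have e: "2 * pi * real k / real n = pi * (2 * real k / real n)" by simp
    ultimately show ?thesis by (simp only: e mult_1_right)
  qed
  moreover have "0 \<le> 2 * pi * real k / real n" by simp
  ultimately have "cos pi < cos (2 * pi * real k / real n)"
    by (intro cos_monotone_0_pi) auto
  then have "0 < 2 + 2 * cos (2 * pi * real k / real n)" by simp
  moreover have "2 + th n k = of_real (2 + 2 * cos (2 * pi * real k / real n))" by (simp add: th_cos)
  ultimately show ?thesis by simp
qed

lemma part_a:
  assumes n: "n = 2 ^ j * 8"
  shows "let pn = 2 + zeta n + inverse (zeta n) in
           normF n pn = 2 \<and> pn \<in> Ocyc n \<and> totally_positive n pn \<and> prime_above_2 n = PIdl\<^bsub>Oring n\<^esub> pn"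
proof -
  have g: "good n" unfolding n by (rule good_a)
  have pn: "2 + zeta n + inverse (zeta n) = ev (theta n) [:2, 1:]" by (simp add: theta_def)
  have N: "normF n (ev (theta n) [:2, 1:]) = 2"
    using normF_ev[OF g, of "[:2,1:]"] norm_vals_a[of j] by (simp add: n)
  have TP: "totally_positive n (ev (theta n) [:2, 1:])"
    unfolding totally_positive_def
  proof
    fix k assume k: "k \<in> emb_idx n"
    have "conj_emb n k (ev (theta n) [:2, 1:]) = ev (th n k) [:2, 1:]" by (rule conj_ev[OF g k])
    also have "\<dots> = 2 + th n k" by simp
    finally show "conj_emb n k (ev (theta n) [:2, 1:]) \<in> \<real> \<and> 0 < Re (conj_emb n k (ev (theta n) [:2, 1:]))"
      using th_real_pos[OF k] by simp
  qed
  obtain Q where Q: "itp La j = monom 1 (2 ^ Suc j) + smult 2 Q"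
    using itp_form[OF La_form, of j] by blast
  have root: "ev (theta n) (itp La j) = 0"
    using roots_a[of 1 j] by (simp add: n theta_th)
  have one: "1 \<notin> PIdl\<^bsub>Oring n\<^esub> (ev (theta n) [:2, 1:])"
  proof (rule one_notin[where D=2])
    show "\<exists>a b. normF n (ev (theta n) f) = of_int (a^2 - 2 * b^2)" for f
      using normF_ev[OF g, of f] norm_form_a[of j f] by (simp add: n)
    show "normF n (ev (theta n) [:2, 1:]) = of_int 2" using N by simp
  qed (simp_all add: g)
  have P: "prime_above_2 n = PIdl\<^bsub>Oring n\<^esub> (ev (theta n) [:2, 1:])"
  proof (rule prime_main[OF _ Q _ root])
    show "theta n \<in> Ocyc n" using Oc_ev[of n "[:0,1:]"] by simp
    show "poly (itp La j) (- 2) = 2 \<or> poly (itp La j) (- 2) = - 2" using itpa_m2 by simp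
    show "ev (theta n) [:2, 1:] = theta n + 2" by simp
    show "theta n = ev (theta n) [:2, 1:] + of_int (-2)" by simp
  qed (use one in simp_all)
  show ?thesis unfolding pn Let_def using N TP P Oc_ev[of n "[:2,1:]"] by blast
qed

lemma part_b:
  assumes n: "n = 2 ^ j * 12"
  shows "let pn' = 1 + zeta n + inverse (zeta n) in
              normF n pn' = -2 \<and> normF n (pn' - 2) = -2 \<and>
              prime_above_2 n = PIdl\<^bsub>Oring n\<^esub> pn' \<and>
              (\<forall>u\<in>Units (Oring n). normF n u = 1) \<and>
              \<not> (\<exists>x\<in>Ocyc n. normF n x = 2)"
proof -
  have g: "good n" unfolding n by (rule good_b)
  have pn: "1 + zeta n + inverse (zeta n) = ev (theta n) [:1, 1:]" by (simp add: theta_def)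
  have pn2: "ev (theta n) [:1, 1:] - 2 = ev (theta n) [:-1, 1:]" by simp
  have NF: "\<exists>a b. normF n (ev (theta n) f) = of_int (a^2 - 3 * b^2)" for f
    using normF_ev[OF g, of f] norm_form_b[of j f] by (simp add: n)
  have N1: "normF n (ev (theta n) [:1, 1:]) = -2"
    using normF_ev[OF g, of "[:1,1:]"] norm_vals_b[of j] by (simp add: n)
  have "normF n (ev (theta n) [:-1, 1:]) = (\<Prod>k\<in>emb_idx n. th n k - 1)"
    unfolding normF_ev[OF g] by (rule prod.cong) (simp_all add: algebra_simps)
  then have N2: "normF n (ev (theta n) [:-1, 1:]) = -2"
    using norm_vals_b[of j] by (simp add: n)
  obtain Q where Q: "itp Lb j = monom 1 (2 ^ Suc j) + smult 2 Q"
    using itp_form[OF Lb_form, of j] by blast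
  have root: "ev (theta n - 1) (itp Lb j) = 0"
    using roots_b[of 1 j] by (simp add: n theta_th)
  have one: "1 \<notin> PIdl\<^bsub>Oring n\<^esub> (ev (theta n) [:1, 1:])"
  proof (rule one_notin[where D=3])
    show "\<exists>a b. normF n (ev (theta n) f) = of_int (a^2 - 3 * b^2)" for f by (rule NF)
    show "normF n (ev (theta n) [:1, 1:]) = of_int (-2)" using N1 by simp
  qed (simp_all add: g)
  have P: "prime_above_2 n = PIdl\<^bsub>Oring n\<^esub> (ev (theta n) [:1, 1:])"
  proof (rule prime_main[OF _ Q _ root])
    have "theta n \<in> Ocyc n" using Oc_ev[of n "[:0,1:]"] by simp
    then show "theta n - 1 \<in> Ocyc n" by (intro Oc_diff Oc_1)
    show "poly (itp Lb j) (- 2) = 2 \<or> poly (itp Lb j) (- 2) = - 2" using itpb_m2 by simp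
    show "ev (theta n) [:1, 1:] = theta n - 1 + 2" by simp
    show "theta n = ev (theta n) [:1, 1:] + of_int (-1)" by simp
  qed (use one in simp_all)
  have U: "normF n u = 1" if u: "u \<in> Units (Oring n)" for u
  proof -
    from u have uO: "u \<in> Ocyc n" and "\<exists>v\<in>Ocyc n. v * u = 1" by (auto simp: Units_def)
    then obtain v where vO: "v \<in> Ocyc n" and vu: "v * u = 1" by blast
    obtain f where f: "u = ev (theta n) f" using uO by (auto simp: Ocyc_iff)
    obtain h where h: "v = ev (theta n) h" using vO by (auto simp: Ocyc_iff)
    obtain a b where ab: "normF n u = of_int (a^2 - 3 * b^2)" using NF[of f] f by blast
    obtain c e where ce: "normF n v = of_int (c^2 - 3 * e^2)" using NF[of h] h by blast
    have "1 = normF n (v * u)" using vu normF_1[OF g] by simp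
    also have "\<dots> = normF n v * normF n u" unfolding f h by (rule normF_mult[OF g])
    finally have "of_int ((c^2 - 3 * e^2) * (a^2 - 3 * b^2)) = (1::complex)" using ab ce by simp
    then have "(c^2 - 3 * e^2) * (a^2 - 3 * b^2) = 1" by (metis of_int_eq_1_iff)
    then have "a^2 - 3 * b^2 = 1 \<or> a^2 - 3 * b^2 = -1" unfolding zmult_eq_1_iff by blast
    then have "a^2 - 3 * b^2 = 1" using no_m1[of a b] by blast
    then show ?thesis using ab by simp
  qed
  have N2x: "\<not> (\<exists>x\<in>Ocyc n. normF n x = 2)"
  proof
    assume "\<exists>x\<in>Ocyc n. normF n x = 2"
    then obtain x where xO: "x \<in> Ocyc n" and x2: "normF n x = 2" by blast
    obtain f where f: "x = ev (theta n) f" using xO by (auto simp: Ocyc_iff)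
    obtain a b where ab: "normF n x = of_int (a^2 - 3 * b^2)" using NF[of f] f by blast
    then have "of_int (a^2 - 3 * b^2) = (of_int 2 :: complex)" using x2 by simp
    then have "a^2 - 3 * b^2 = 2" by (simp only: of_int_eq_iff)
    then show False using no_2 by blast
  qed
  show ?thesis unfolding pn Let_def pn2 using N1 N2 P U N2x by blast
qed

theorem proposition3p12:
  shows "(\<forall>s::nat. 2 ^ s \<ge> (8::nat) \<longrightarrow>
           (let n = 2 ^ s; pn = 2 + zeta n + inverse (zeta n) in
              normF n pn = 2 \<and> pn \<in> Ocyc n \<and> totally_positive n pn \<and>
              prime_above_2 n = PIdl\<^bsub>Oring n\<^esub> pn))
       \<and> (\<forall>s::nat. 3 * 2 ^ s \<ge> (12::nat) \<longrightarrow>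
           (let n = 3 * 2 ^ s; pn' = 1 + zeta n + inverse (zeta n) in
              normF n pn' = -2 \<and> normF n (pn' - 2) = -2 \<and>
              prime_above_2 n = PIdl\<^bsub>Oring n\<^esub> pn' \<and>
              (\<forall>u\<in>Units (Oring n). normF n u = 1) \<and>
              \<not> (\<exists>x\<in>Ocyc n. normF n x = 2)))"
proof (intro conjI allI impI)
  fix s :: nat
  assume h: "2 ^ s \<ge> (8::nat)"
  have "s \<ge> 3"
  proof (rule ccontr)
    assume "\<not> s \<ge> 3"
    then have "s = 0 \<or> s = 1 \<or> s = 2" by auto
    then show False using h by auto
  qed
  then obtain t where st: "s = t + 3" using le_Suc_ex[of 3 s] by (auto simp: add.commute)
  have n: "(2::nat) ^ s = 2 ^ (s - 3) * 8" unfolding st by (simp add: power_add)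
  show "let n = 2 ^ s; pn = 2 + zeta n + inverse (zeta n) in
              normF n pn = 2 \<and> pn \<in> Ocyc n \<and> totally_positive n pn \<and>
              prime_above_2 n = PIdl\<^bsub>Oring n\<^esub> pn"
    using part_a[OF n] unfolding Let_def by blast
next
  fix s :: nat
  assume h: "3 * 2 ^ s \<ge> (12::nat)"
  have "s \<ge> 2"
  proof (rule ccontr)
    assume "\<not> s \<ge> 2"
    then have "s = 0 \<or> s = 1" by auto
    then show False using h by auto
  qed
  then obtain t where st: "s = t + 2" using le_Suc_ex[of 2 s] by (auto simp: add.commute)
  have n: "3 * (2::nat) ^ s = 2 ^ (s - 2) * 12" unfolding st by (simp add: power_add)
  show "let n = 3 * 2 ^ s; pn' = 1 + zeta n + inverse (zeta n) in
              normF n pn' = -2 \<and> normF n (pn' - 2) = -2 \<and>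
              prime_above_2 n = PIdl\<^bsub>Oring n\<^esub> pn' \<and>
              (\<forall>u\<in>Units (Oring n). normF n u = 1) \<and>
              \<not> (\<exists>x\<in>Ocyc n. normF n x = 2)"
    using part_b[OF n] unfolding Let_def by blast
qed

end
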